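(* Let $\Gamma$ be a distance-regular graph with diameter $D\ge 3$ and valency $k$, and assume $a_i=0$ for $0\le i\le D-2$ and $a_{D-1}\neq 0$. Let $M$ be the $D\times D$ tridiagonal matrix with rows and columns indexed by $0,1,\dots,D-1$, whose diagonal is $(0,0,\dots,0,k-c_{D-1})$, whose superdiagonal entries are $M_{i,i+1}=b_i$ ($0\le i\le D-2$) and whose subdiagonal entries are $M_{i,i-1}=c_i$ ($1\le i\le D-1$). Then: (i) for every $\theta\in\mathbb{R}$ the pair $\theta,k$ is tight; (ii) for every real number $\theta$ that is an eigenvalue of $M$, the pair $\theta,-k$ is tight; (iii) $\Gamma$ has no further tight pairs, i.e. if $\theta,\theta'\in\mathbb{R}$ form a tight pair then either one of them equals $k$, or one of them equals $-k$ and the other is an eigenvalue of $M$.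
   Context: $\Gamma$ is a finite connected undirected graph without loops or multiple edges, distance-regular with diameter $D$, intersection numbers $a_i,b_i,c_i$ ($c_0=0$, $b_D=0$, $c_1=1$), valency $k=b_0$, and $c_i+a_i+b_i=k$ for $0\le i\le D$. For $\theta\in\mathbb{R}$, the pseudo cosine sequence for $\theta$ is the sequence of reals $\sigma_0,\dots,\sigma_D$ with $\sigma_0=1$ and $c_i\sigma_{i-1}+a_i\sigma_i+b_i\sigma_{i+1}=\theta\sigma_i$ for $0\le i\le D-1$. Two pseudo cosine sequences $\sigma_i$, $\rho_i$ form a tight pair if $(\sigma_i\rho_i)_{i=0}^D$ is a pseudo cosine sequence; reals $\theta,\theta'$ form a tight pair if their pseudo cosine sequences do. *)

theory Defs
  imports Main "HOL-Library.Multiset" "Jordan_Normal_Form.Char_Poly"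
begin

definition walk :: "('v \<Rightarrow> 'v \<Rightarrow> bool) \<Rightarrow> 'v \<Rightarrow> 'v \<Rightarrow> nat \<Rightarrow> bool" where
  "walk E x y n \<longleftrightarrow> (\<exists>p :: nat \<Rightarrow> 'v. p 0 = x \<and> p n = y \<and> (\<forall>i<n. E (p i) (p (Suc i))))"

text \<open>Path-length distance (meaningful for connected graphs).\<close>
definition gdist :: "('v \<Rightarrow> 'v \<Rightarrow> bool) \<Rightarrow> 'v \<Rightarrow> 'v \<Rightarrow> nat" where
  "gdist E x y = (LEAST n. walk E x y n)"

definition fin_conn_graph :: "'v set \<Rightarrow> ('v \<Rightarrow> 'v \<Rightarrow> bool) \<Rightarrow> bool" where
  "fin_conn_graph V E \<longleftrightarrow> finite V \<and> V \<noteq> {} \<and>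
     (\<forall>x y. E x y \<longrightarrow> x \<in> V \<and> y \<in> V) \<and>
     (\<forall>x y. E x y \<longrightarrow> E y x) \<and> (\<forall>x. \<not> E x x) \<and>
     (\<forall>x\<in>V. \<forall>y\<in>V. \<exists>n. walk E x y n)"

definition diameter :: "'v set \<Rightarrow> ('v \<Rightarrow> 'v \<Rightarrow> bool) \<Rightarrow> nat" where
  "diameter V E = Max {gdist E x y | x y. x \<in> V \<and> y \<in> V}"

definition distance_regular ::
  "'v set \<Rightarrow> ('v \<Rightarrow> 'v \<Rightarrow> bool) \<Rightarrow> nat \<Rightarrow> nat \<Rightarrow> (nat \<Rightarrow> nat) \<Rightarrow> (nat \<Rightarrow> nat) \<Rightarrow> (nat \<Rightarrow> nat) \<Rightarrow> bool" where
  "distance_regular V E D k a b c \<longleftrightarrow> fin_conn_graph V E \<and> D = diameter V E \<and>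
     (\<forall>x\<in>V. card {z\<in>V. E x z} = k) \<and>
     (\<forall>x\<in>V. \<forall>y\<in>V.
        card {z\<in>V. E y z \<and> Suc (gdist E x z) = gdist E x y} = c (gdist E x y) \<and>
        card {z\<in>V. E y z \<and> gdist E x z = gdist E x y} = a (gdist E x y) \<and>
        card {z\<in>V. E y z \<and> gdist E x z = Suc (gdist E x y)} = b (gdist E x y))"

text \<open>Pseudo cosine sequence for theta (only indices 0..D matter).\<close>
definition pseudo_cosine ::
  "nat \<Rightarrow> (nat \<Rightarrow> nat) \<Rightarrow> (nat \<Rightarrow> nat) \<Rightarrow> (nat \<Rightarrow> nat) \<Rightarrow> real \<Rightarrow> (nat \<Rightarrow> real) \<Rightarrow> bool" where
  "pseudo_cosine D a b c \<theta> \<sigma> \<longleftrightarrow> \<sigma> 0 = 1 \<and>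
     (\<forall>i<D. real (c i) * (if i = 0 then 0 else \<sigma> (i - 1)) + real (a i) * \<sigma> i
              + real (b i) * \<sigma> (Suc i) = \<theta> * \<sigma> i)"

definition tight_seqs ::
  "nat \<Rightarrow> (nat \<Rightarrow> nat) \<Rightarrow> (nat \<Rightarrow> nat) \<Rightarrow> (nat \<Rightarrow> nat) \<Rightarrow> (nat \<Rightarrow> real) \<Rightarrow> (nat \<Rightarrow> real) \<Rightarrow> bool" where
  "tight_seqs D a b c \<sigma> \<rho> \<longleftrightarrow> (\<exists>\<eta>. pseudo_cosine D a b c \<eta> (\<lambda>i. \<sigma> i * \<rho> i))"

definition tight_pair ::
  "nat \<Rightarrow> (nat \<Rightarrow> nat) \<Rightarrow> (nat \<Rightarrow> nat) \<Rightarrow> (nat \<Rightarrow> nat) \<Rightarrow> real \<Rightarrow> real \<Rightarrow> bool" where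
  "tight_pair D a b c \<theta> \<theta>' \<longleftrightarrow> (\<exists>\<sigma> \<rho>. pseudo_cosine D a b c \<theta> \<sigma> \<and> pseudo_cosine D a b c \<theta>' \<rho>
      \<and> tight_seqs D a b c \<sigma> \<rho>)"

definition matM :: "nat \<Rightarrow> nat \<Rightarrow> (nat \<Rightarrow> nat) \<Rightarrow> (nat \<Rightarrow> nat) \<Rightarrow> real mat" where
  "matM D k b c = mat D D (\<lambda>(i, j).
      if i = j then (if i = D - 1 then real k - real (c (D - 1)) else 0)
      else if j = Suc i then real (b i)
      else if i = Suc j then real (c i)
      else 0)"

end

theory Submission
  imports Defs
begin


lemma walk0: "walk E x y 0 \<longleftrightarrow> x = y"
  unfolding walk_def by auto

lemma walk_append: "walk E x y m \<Longrightarrow> walk E y z n \<Longrightarrow> walk E x z (m+n)"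
proof -
  assume "walk E x y m" "walk E y z n"
  then obtain p q where p: "p 0 = x" "p m = y" "\<forall>i<m. E (p i) (p (Suc i))"
    and q: "q 0 = y" "q n = z" "\<forall>i<n. E (q i) (q (Suc i))" unfolding walk_def by blast
  define r where "r j = (if j \<le> m then p j else q (j - m))" for j
  have "r 0 = x" using p by (simp add: r_def)
  moreover have "r (m+n) = z" using p q by (auto simp: r_def)
  moreover have "\<forall>i<m+n. E (r i) (r (Suc i))"
  proof (intro allI impI)
    fix i assume i: "i < m+n"
    show "E (r i) (r (Suc i))"
    proof (cases "i < m")
      case True then show ?thesis using p by (simp add: r_def)
    next
      case False
      then have "Suc i - m = Suc (i - m)" by auto
      then show ?thesis using False i q p by (cases "i = m") (auto simp: r_def)
    qed
  qed
  ultimately show ?thesis unfolding walk_def by blast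
qed

lemma walk_one: "walk E x y 1 \<longleftrightarrow> E x y"
  unfolding walk_def
proof
  assume "\<exists>p. p 0 = x \<and> p 1 = y \<and> (\<forall>i<1. E (p i) (p (Suc i)))"
  then show "E x y" by auto
next
  assume "E x y" then show "\<exists>p. p 0 = x \<and> p 1 = y \<and> (\<forall>i<1. E (p i) (p (Suc i)))"
    by (intro exI[of _ "\<lambda>i. if i = 0 then x else y"]) auto
qed

lemma gdist_walk: "\<exists>n. walk E x y n \<Longrightarrow> walk E x y (gdist E x y)"
  unfolding gdist_def by (rule LeastI_ex)

lemma gdist_le: "walk E x y n \<Longrightarrow> gdist E x y \<le> n"
  unfolding gdist_def by (rule Least_le)

lemma gdist0: "gdist E x y = 0 \<Longrightarrow> \<exists>n. walk E x y n \<Longrightarrow> x = y"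
  using gdist_walk walk0 by metis

lemma key_path:
  assumes drg: "distance_regular V E D k a b c" and i: "i < D"
  shows "\<exists>x y z. x\<in>V \<and> y\<in>V \<and> z\<in>V \<and> E y z \<and> gdist E x y = i \<and> gdist E x z = Suc i"
proof -
  have g: "fin_conn_graph V E" and DD: "D = diameter V E" using drg unfolding distance_regular_def by auto
  have fV: "finite V" and ne: "V \<noteq> {}" and EV: "\<And>x y. E x y \<Longrightarrow> x \<in> V \<and> y \<in> V"
    and conn: "\<And>x y. x\<in>V \<Longrightarrow> y\<in>V \<Longrightarrow> \<exists>n. walk E x y n"
    using g unfolding fin_conn_graph_def by auto
  let ?S = "{gdist E x y | x y. x \<in> V \<and> y \<in> V}"
  have "?S = (\<lambda>(x,y). gdist E x y) ` (V \<times> V)" by auto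
  then have fS: "finite ?S" using fV by simp
  have "?S \<noteq> {}" using ne by auto
  then have "Max ?S \<in> ?S" using fS Max_in by blast
  then obtain x w where xw: "x \<in> V" "w \<in> V" "gdist E x w = D" using DD unfolding diameter_def by auto
  then have "walk E x w D" using gdist_walk conn by metis
  then obtain p where p: "p 0 = x" "p D = w" "\<forall>i<D. E (p i) (p (Suc i))" unfolding walk_def by blast
  have pV: "p j \<in> V" if "j \<le> D" for j
  proof (cases j)
    case 0 then show ?thesis using p xw by simp
  next
    case (Suc j') then show ?thesis using p that EV[of "p j'" "p (Suc j')"] by auto
  qed
  have gd: "gdist E x (p j) = j" if j: "j \<le> D" for j
  proof -
    have w1: "walk E x (p j) j" unfolding walk_def using p j by (intro exI[of _ p]) auto
    have "walk E (p j) w (D - j)" unfolding walk_def using p j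
      by (intro exI[of _ "\<lambda>t. p (j + t)"]) auto
    moreover have "walk E x (p j) (gdist E x (p j))" using gdist_walk conn xw pV j by metis
    ultimately have "walk E x w (gdist E x (p j) + (D - j))" using walk_append by metis
    then have "D \<le> gdist E x (p j) + (D - j)" using gdist_le xw by metis
    moreover have "gdist E x (p j) \<le> j" using gdist_le w1 by metis
    ultimately show ?thesis using j by linarith
  qed
  show ?thesis
    using xw(1) pV[of i] pV[of "Suc i"] p(3) i gd[of i] gd[of "Suc i"]
    by (intro exI[of _ x] exI[of _ "p i"] exI[of _ "p (Suc i)"]) auto
qed

lemma drg_facts:
  assumes drg: "distance_regular V E D k a b c"
  shows "\<forall>i<D. (if i = 0 then 0 else c i) + a i + b i = k"
    and "\<forall>i<D. b i > 0"
    and "D \<ge> 1 \<Longrightarrow> c 1 = 1"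
proof -
  have g: "fin_conn_graph V E" using drg unfolding distance_regular_def by auto
  have fV: "finite V" and EV: "\<And>x y. E x y \<Longrightarrow> x \<in> V \<and> y \<in> V"
    and sym: "\<And>x y. E x y \<Longrightarrow> E y x"
    and conn: "\<And>x y. x\<in>V \<Longrightarrow> y\<in>V \<Longrightarrow> \<exists>n. walk E x y n"
    using g unfolding fin_conn_graph_def by auto
  have deg: "\<And>x. x\<in>V \<Longrightarrow> card {z\<in>V. E x z} = k" using drg unfolding distance_regular_def by auto
  have cc: "\<And>x y. x\<in>V \<Longrightarrow> y\<in>V \<Longrightarrow> card {z\<in>V. E y z \<and> Suc (gdist E x z) = gdist E x y} = c (gdist E x y)"
   and aa: "\<And>x y. x\<in>V \<Longrightarrow> y\<in>V \<Longrightarrow> card {z\<in>V. E y z \<and> gdist E x z = gdist E x y} = a (gdist E x y)"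
   and bb: "\<And>x y. x\<in>V \<Longrightarrow> y\<in>V \<Longrightarrow> card {z\<in>V. E y z \<and> gdist E x z = Suc (gdist E x y)} = b (gdist E x y)"
    using drg unfolding distance_regular_def by auto
  show "\<forall>i<D. b i > 0"
  proof (intro allI impI)
    fix i assume "i < D"
    then obtain x y z where xyz: "x\<in>V" "y\<in>V" "z\<in>V" "E y z" "gdist E x y = i" "gdist E x z = Suc i"
      using key_path[OF drg] by blast
    have "z \<in> {z\<in>V. E y z \<and> gdist E x z = Suc (gdist E x y)}" using xyz by auto
    moreover have "finite {z\<in>V. E y z \<and> gdist E x z = Suc (gdist E x y)}" using fV by simp
    ultimately have "card {z\<in>V. E y z \<and> gdist E x z = Suc (gdist E x y)} > 0"
      using card_gt_0_iff by blast
    then show "b i > 0" using bb[OF xyz(1,2)] xyz by simp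
  qed
  show "\<forall>i<D. (if i = 0 then 0 else c i) + a i + b i = k"
  proof (intro allI impI)
    fix i assume "i < D"
    then obtain x y z where xyz: "x\<in>V" "y\<in>V" "z\<in>V" "E y z" "gdist E x y = i" "gdist E x z = Suc i"
      using key_path[OF drg] by blast
    let ?A = "{z\<in>V. E y z \<and> Suc (gdist E x z) = gdist E x y}"
    let ?B = "{z\<in>V. E y z \<and> gdist E x z = gdist E x y}"
    let ?C = "{z\<in>V. E y z \<and> gdist E x z = Suc (gdist E x y)}"
    have nb: "gdist E x w \<le> Suc (gdist E x y) \<and> gdist E x y \<le> Suc (gdist E x w)" if "w \<in> V" "E y w" for w
    proof -
      have wy: "walk E x y (gdist E x y)" using gdist_walk conn xyz by metis
      have ww: "walk E x w (gdist E x w)" using gdist_walk conn xyz that by metis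
      have "walk E x w (gdist E x y + 1)" using walk_append[OF wy] walk_one that by metis
      moreover have "walk E x y (gdist E x w + 1)" using walk_append[OF ww] walk_one sym that by metis
      ultimately show ?thesis using gdist_le by (metis Suc_eq_plus1)
    qed
    have "{z\<in>V. E y z} = ?A \<union> ?B \<union> ?C"
    proof
      show "{z\<in>V. E y z} \<subseteq> ?A \<union> ?B \<union> ?C"
      proof
        fix w assume "w \<in> {z\<in>V. E y z}"
        then have "w \<in> V" "E y w" by auto
        with nb[OF this] show "w \<in> ?A \<union> ?B \<union> ?C" by auto
      qed
    qed auto
    then have "k = card (?A \<union> ?B \<union> ?C)" using deg xyz by metis
    also have "\<dots> = card ?A + card ?B + card ?C"
      using fV by (subst card_Un_disjoint; auto)+
    finally have k: "k = card ?A + card ?B + card ?C" .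
    have "card ?A = (if i = 0 then 0 else c i)"
    proof (cases "i = 0")
      case True then have "?A = {}" using xyz by auto
      then show ?thesis using True by (metis card.empty)
    next
      case False then show ?thesis using cc[OF xyz(1,2)] xyz by simp
    qed
    then show "(if i = 0 then 0 else c i) + a i + b i = k"
      using k aa[OF xyz(1,2)] bb[OF xyz(1,2)] xyz by simp
  qed
  assume "D \<ge> 1"
  then obtain x y z where xyz: "x\<in>V" "y\<in>V" "z\<in>V" "E y z" "gdist E x y = 0" "gdist E x z = Suc 0"
      using key_path[OF drg, of 0] by auto
  have "walk E x z 1" using gdist_walk conn xyz by (metis One_nat_def)
  then have Ezx: "E z x" using walk_one sym by metis
  have "{w\<in>V. E z w \<and> Suc (gdist E x w) = gdist E x z} = {x}"
  proof
    show "{w\<in>V. E z w \<and> Suc (gdist E x w) = gdist E x z} \<subseteq> {x}"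
    proof
      fix w assume w: "w \<in> {w\<in>V. E z w \<and> Suc (gdist E x w) = gdist E x z}"
      then have "gdist E x w = 0" "w \<in> V" using xyz by auto
      then show "w \<in> {x}" using gdist0[of E x w] conn xyz by auto
    qed
    have "gdist E x x = 0" using gdist_le[of E x x 0] walk0 by (metis le_zero_eq)
    then show "{x} \<subseteq> {w\<in>V. E z w \<and> Suc (gdist E x w) = gdist E x z}" using xyz Ezx by auto
  qed
  then show "c 1 = 1" using cc[OF xyz(1,3)] xyz by simp
qed



lemma dimM[simp]: "dim_row (matM D k b c) = D" "dim_col (matM D k b c) = D"
  by (simp_all add: matM_def)

lemma entM: "i < D \<Longrightarrow> j < D \<Longrightarrow> matM D k b c $$ (i, j) =
      (if i = j then (if i = D - 1 then real k - real (c (D - 1)) else 0)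
      else if j = Suc i then real (b i)
      else if i = Suc j then real (c i)
      else 0)"
  unfolding matM_def by (rule trans[OF index_mat(1)]) simp_all

lemma rowM:
  assumes v: "v \<in> carrier_vec D" and i: "i < D"
  shows "(matM D k b c *\<^sub>v v) $ i =
     (if 0 < i then real (c i) * v $ (i - 1) else 0)
   + (if Suc i < D then real (b i) * v $ (Suc i) else 0)
   + (if i = D - 1 then (real k - real (c (D - 1))) * v $ i else 0)"
proof -
  have "(matM D k b c *\<^sub>v v) $ i = (\<Sum>j\<in>{0..<D}. matM D k b c $$ (i, j) * v $ j)"
    using v i by (simp add: scalar_prod_def)
  also have "\<dots> = (\<Sum>j\<in>{0..<D}. (if j = i - 1 \<and> 0 < i then real (c i) * v $ (i - 1) else 0)
       + (if j = Suc i then real (b i) * v $ (Suc i) else 0)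
       + (if j = i \<and> i = D - 1 then (real k - real (c (D - 1))) * v $ i else 0))"
  proof (intro sum.cong refl)
    fix j assume j: "j \<in> {0..<D}"
    consider "j = i" | "j = Suc i" | "i = Suc j" | "j \<noteq> i \<and> j \<noteq> Suc i \<and> i \<noteq> Suc j" by blast
    then show "matM D k b c $$ (i, j) * v $ j = (if j = i - 1 \<and> 0 < i then real (c i) * v $ (i - 1) else 0)
       + (if j = Suc i then real (b i) * v $ (Suc i) else 0)
       + (if j = i \<and> i = D - 1 then (real k - real (c (D - 1))) * v $ i else 0)"
          proof cases
      case 1 then show ?thesis using i by (simp add: entM; linarith?)
    next
      case 2 then show ?thesis using i j by (simp add: entM; linarith?)
    next
      case 3 then show ?thesis using i j by (simp add: entM; linarith?)
    next
      case 4 then show ?thesis using i j by (simp add: entM; linarith?)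
    qed
  qed
  also have "\<dots> = (if 0 < i then real (c i) * v $ (i - 1) else 0)
   + (if Suc i < D then real (b i) * v $ (Suc i) else 0)
   + (if i = D - 1 then (real k - real (c (D - 1))) * v $ i else 0)"
    using i by (simp add: sum.distrib)
  finally show ?thesis .
qed



lemma pc_eq: "pseudo_cosine D a b c \<theta> \<sigma> \<Longrightarrow> i < D \<Longrightarrow>
   real (c i) * (if i = 0 then 0 else \<sigma> (i - 1)) + real (a i) * \<sigma> i + real (b i) * \<sigma> (Suc i) = \<theta> * \<sigma> i"
  unfolding pseudo_cosine_def by blast

fun pc :: "(nat \<Rightarrow> nat) \<Rightarrow> (nat \<Rightarrow> nat) \<Rightarrow> (nat \<Rightarrow> nat) \<Rightarrow> real \<Rightarrow> nat \<Rightarrow> real" where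
  "pc a b c \<theta> 0 = 1"
| "pc a b c \<theta> (Suc 0) = (\<theta> - a 0) / b 0"
| "pc a b c \<theta> (Suc (Suc i)) = ((\<theta> - a (Suc i)) * pc a b c \<theta> (Suc i) - c (Suc i) * pc a b c \<theta> i) / b (Suc i)"

lemma pc_ex:
  assumes H2: "\<forall>i<D. 0 < b i"
  shows "pseudo_cosine D a b c \<theta> (pc a b c \<theta>)"
  unfolding pseudo_cosine_def
proof (intro conjI allI impI)
  fix i assume i: "i < D"
  have bi: "real (b i) \<noteq> 0" using H2 i by simp
  show "real (c i) * (if i = 0 then 0 else pc a b c \<theta> (i - 1)) + real (a i) * pc a b c \<theta> i
              + real (b i) * pc a b c \<theta> (Suc i) = \<theta> * pc a b c \<theta> i"
  proof (cases i)
    case 0 then show ?thesis using bi by (simp add: field_simps)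
  next
    case (Suc j) then show ?thesis using bi by (simp add: field_simps)
  qed
qed simp

lemma pc_unique:
  assumes H2: "\<forall>i<D. 0 < b i"
    and s: "pseudo_cosine D a b c \<theta> \<sigma>" and s': "pseudo_cosine D a b c \<theta> \<sigma>'"
  shows "\<forall>j\<le>D. \<sigma> j = \<sigma>' j"
proof -
  have "i \<le> D \<Longrightarrow> \<forall>j\<le>i. \<sigma> j = \<sigma>' j" for i
  proof (induction i)
    case 0 then show ?case using s s' unfolding pseudo_cosine_def by simp
  next
    case (Suc i)
    then have i: "i < D" and IH: "\<forall>j\<le>i. \<sigma> j = \<sigma>' j" by auto
    note e1 = pc_eq[OF s i] and e2 = pc_eq[OF s' i]
    have X: "(if i = 0 then 0 else \<sigma> (i - 1)) = (if i = 0 then 0 else \<sigma>' (i - 1))" using IH by auto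
    have Y: "\<sigma> i = \<sigma>' i" using IH by auto
    have e3: "real (c i) * (if i = 0 then 0 else \<sigma> (i - 1)) + real (a i) * \<sigma> i +
      real (b i) * \<sigma>' (Suc i) = \<theta> * \<sigma> i" using e2 unfolding X[symmetric] Y[symmetric] .
    have "real (b i) * \<sigma> (Suc i) = real (b i) * \<sigma>' (Suc i)" using e1 e3 by linarith
    then have "\<sigma> (Suc i) = \<sigma>' (Suc i)" using H2 i by (metis less_numeral_extra(3) mult_cancel_left of_nat_0_less_iff)
    then show ?case using IH le_Suc_eq by auto
  qed
  then show ?thesis by blast
qed



lemma alg:
  fixes k t t' s1 r1 s2 r2 e :: real
  assumes h1: "k*s1 = t" and h2: "k*r1 = t'" and h3: "k*s1*r1 = e" and h4: "1 + (k-1)*s2 = t*s1"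
   and h5: "1+(k-1)*r2 = t'*r1" and h6: "1 + (k-1)*s2*r2 = e*s1*r1"
  shows "(k^2-t^2)*(k^2-t'^2) = 0"
proof -
  have a0: "(k-1)*s2 = t*s1 - 1" using h4 by linarith
  have a: "k*(k-1)*s2 = t^2 - k"
  proof -
    have "k*(k-1)*s2 = k*((k-1)*s2)" by simp
    also have "\<dots> = t*(k*s1) - k" unfolding a0 by (simp add: algebra_simps)
    finally show ?thesis using h1 by (simp add: power2_eq_square)
  qed
  have b0: "(k-1)*r2 = t'*r1 - 1" using h5 by linarith
  have b: "k*(k-1)*r2 = t'^2 - k"
  proof -
    have "k*(k-1)*r2 = k*((k-1)*r2)" by simp
    also have "\<dots> = t'*(k*r1) - k" unfolding b0 by (simp add: algebra_simps)
    finally show ?thesis using h2 by (simp add: power2_eq_square)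
  qed
  have c: "k^3*e*s1*r1 = t^2*t'^2"
  proof -
    have "k^3*e*s1*r1 = (k*s1)*(k*s1)*((k*r1)*(k*r1))" unfolding h3[symmetric] by (simp add: algebra_simps power3_eq_cube)
    then show ?thesis using h1 h2 by (simp add: power2_eq_square)
  qed
  have d: "k^3*(k-1)*(1 + (k-1)*s2*r2) = k^3*(k-1)*(e*s1*r1)" using h6 by simp
  have "k^3*(k-1) + k*(t^2 - k)*(t'^2-k) = (k-1)*(t^2*t'^2)"
  proof -
    have "k^3*(k-1)*(1 + (k-1)*s2*r2) = k^3*(k-1) + k*(k*(k-1)*s2)*(k*(k-1)*r2)" by (simp add: algebra_simps power3_eq_cube)
    moreover have "k^3*(k-1)*(e*s1*r1) = (k-1)*(k^3*e*s1*r1)" by (simp add: algebra_simps)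
    ultimately show ?thesis using a b c d by simp
  qed
  then show ?thesis by (simp add: algebra_simps power2_eq_square power3_eq_cube)
qed



lemma part_i:
  assumes H1: "\<forall>i<D. (if i = 0 then 0 else c i) + a i + b i = k"
    and H2: "\<forall>i<D. 0 < b i"
  shows "tight_pair D a b c \<theta> (real k)"
proof -
  have r: "pseudo_cosine D a b c (real k) (\<lambda>_. 1)"
    unfolding pseudo_cosine_def
  proof (intro conjI allI impI)
    fix i assume i: "i < D"
    have "real ((if i = 0 then 0 else c i) + a i + b i) = real k" using H1 i by simp
    then show "real (c i) * (if i = 0 then 0 else 1) + real (a i) * 1 + real (b i) * 1 = real k * 1"
      by (cases "i = 0") auto
  qed simp
  have "tight_seqs D a b c (pc a b c \<theta>) (\<lambda>_. 1)"
    unfolding tight_seqs_def using pc_ex[OF H2] by auto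
  then show ?thesis unfolding tight_pair_def using pc_ex[OF H2] r by blast
qed

definition rm :: "nat \<Rightarrow> (nat \<Rightarrow> nat) \<Rightarrow> (nat \<Rightarrow> nat) \<Rightarrow> nat \<Rightarrow> real" where
  "rm D a b i = (if i < D then (-1)^i else (-1)^D * (1 + 2 * real (a (D-1)) / real (b (D-1))))"

lemma rm_pc:
  assumes H1: "\<forall>i<D. (if i = 0 then 0 else c i) + a i + b i = k"
    and H2: "\<forall>i<D. 0 < b i" and D3: "D \<ge> 3"
    and a0: "\<forall>i. i \<le> D - 2 \<longrightarrow> a i = 0"
  shows "pseudo_cosine D a b c (- real k) (rm D a b)"
  unfolding pseudo_cosine_def
proof (intro conjI allI impI)
  show "rm D a b 0 = 1" using D3 by (simp add: rm_def)
  fix i assume i: "i < D"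
  have Hi: "real ((if i = 0 then 0 else c i) + a i + b i) = real k" using H1 i by simp
  consider "i = 0" | j where "i = Suc j" "Suc i < D" | m where "i = Suc m" "Suc i = D"
    using i D3 by (cases i) (auto, metis Suc_lessI)
  then show "real (c i) * (if i = 0 then 0 else rm D a b (i - 1)) + real (a i) * rm D a b i +
      real (b i) * rm D a b (Suc i) = - real k * rm D a b i"
  proof cases
    case 1
    then have "a i = 0" using a0 by simp
    then show ?thesis using 1 Hi D3 by (simp add: rm_def)
  next
    case 2
    then have "a i = 0" using a0 by simp
    then have "(real (b i) + real (c i)) * (-1)^j = real k * (-1)^j" using 2 Hi by simp
    then show ?thesis using 2 i \<open>a i = 0\<close> by (simp add: rm_def algebra_simps)
  next
    case 3
    have bD: "real (b i) \<noteq> 0" using H2 i by simp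
    have Di: "D - 1 = i" using 3 by simp
    define s :: real where "s = (-1)^m"
    have r1: "rm D a b (i - 1) = s" using 3 by (simp add: rm_def s_def)
    have r2: "rm D a b i = - s" using 3 by (simp add: rm_def s_def)
    have "(-1::real)^D = s" unfolding s_def using 3 by (metis power_minus1_even power_Suc2 mult_minus1_right minus_minus)
    then have "rm D a b (Suc i) = s * (1 + 2 * real (a i) / real (b i))" using 3 Di by (simp add: rm_def)
    then have e: "real (b i) * rm D a b (Suc i) = s * (real (b i) + 2 * real (a i))" using bD by (simp add: field_simps)
    have k: "real k * s = (real (a i) + real (b i) + real (c i)) * s" using Hi 3 by simp
    show ?thesis unfolding e r1 r2 using 3 k by (simp add: algebra_simps)
  qed
qed



lemma tight_neg:
  assumes H1: "\<forall>i<D. (if i = 0 then 0 else c i) + a i + b i = k"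
    and H2: "\<forall>i<D. 0 < b i" and D3: "D \<ge> 3"
    and a0: "\<forall>i. i \<le> D - 2 \<longrightarrow> a i = 0"
    and s: "pseudo_cosine D a b c \<theta> \<sigma>" and sD: "\<sigma> D = \<sigma> (D - 1)"
  shows "pseudo_cosine D a b c (- \<theta>) (\<lambda>i. \<sigma> i * rm D a b i)"
  unfolding pseudo_cosine_def
proof (intro conjI allI impI)
  show "\<sigma> 0 * rm D a b 0 = 1" using D3 s by (simp add: rm_def pseudo_cosine_def)
  fix i assume i: "i < D"
  note e = pc_eq[OF s i]
  have s0: "\<sigma> 0 = 1" using s by (simp add: pseudo_cosine_def)
  consider "i = 0" | j where "i = Suc j" "Suc i < D" | m where "i = Suc m" "Suc i = D"
    using i D3 by (cases i) (auto, metis Suc_lessI)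
  then show "real (c i) * (if i = 0 then 0 else \<sigma> (i - 1) * rm D a b (i - 1)) + real (a i) * (\<sigma> i * rm D a b i) +
      real (b i) * (\<sigma> (Suc i) * rm D a b (Suc i)) = - \<theta> * (\<sigma> i * rm D a b i)"
  proof cases
    case 1
    then have "a i = 0" using a0 by simp
    then show ?thesis using 1 e D3 s0 by (simp add: rm_def)
  next
    case 2
    then have ai: "a i = 0" using a0 by simp
    define sg :: real where "sg = (-1)^j"
    have r: "rm D a b (i - 1) = sg" "rm D a b i = - sg" "rm D a b (Suc i) = sg" using 2 by (simp_all add: rm_def sg_def)
    have "(real (c i) * \<sigma> j + real (b i) * \<sigma> (Suc i)) * sg = \<theta> * \<sigma> i * sg" using e 2 ai by simp
    then show ?thesis using 2 ai unfolding r by (simp add: algebra_simps)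
  next
    case 3
    have bD: "real (b i) \<noteq> 0" using H2 i by simp
    have Di: "D - 1 = i" using 3 by simp
    define sg :: real where "sg = (-1)^m"
    have r1: "rm D a b (i - 1) = sg" using 3 by (simp add: rm_def sg_def)
    have r2: "rm D a b i = - sg" using 3 by (simp add: rm_def sg_def)
    have "(-1::real)^D = sg" unfolding sg_def using 3 by (metis power_minus1_even power_Suc2 mult_minus1_right minus_minus)
    then have "rm D a b (Suc i) = sg * (1 + 2 * real (a i) / real (b i))" using 3 Di by (simp add: rm_def)
    then have ee: "real (b i) * (\<sigma> (Suc i) * rm D a b (Suc i)) = \<sigma> i * sg * (real (b i) + 2 * real (a i))"
      using bD sD 3 Di by (simp add: field_simps)
    have "(real (c i) * \<sigma> m + real (a i) * \<sigma> i + real (b i) * \<sigma> i) * sg = \<theta> * \<sigma> i * sg"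
      using e 3 sD Di by simp
    then show ?thesis unfolding ee r1 r2 using 3 by (simp add: algebra_simps)
  qed
qed



lemma eig_from_seq:
  assumes H1: "\<forall>i<D. (if i = 0 then 0 else c i) + a i + b i = k"
    and D3: "D \<ge> 3"
    and a0: "\<forall>i. i \<le> D - 2 \<longrightarrow> a i = 0"
    and r: "pseudo_cosine D a b c \<theta> \<rho>" and rD: "\<rho> D = \<rho> (D - 1)"
  shows "eigenvalue (matM D k b c) \<theta>"
proof -
  define v where "v = vec D \<rho>"
  have vc: "v \<in> carrier_vec D" unfolding v_def by simp
  have r0: "\<rho> 0 = 1" using r by (simp add: pseudo_cosine_def)
  have nz: "v \<noteq> 0\<^sub>v D"
  proof
    assume "v = 0\<^sub>v D"
    then have "v $ 0 = (0\<^sub>v D :: real vec) $ 0" by simp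
    then show False using D3 r0 by (simp add: v_def)
  qed
  have Mv: "matM D k b c *\<^sub>v v = \<theta> \<cdot>\<^sub>v v"
  proof (rule eq_vecI)
    show "dim_vec (matM D k b c *\<^sub>v v) = dim_vec (\<theta> \<cdot>\<^sub>v v)" using vc by simp
    fix i assume "i < dim_vec (\<theta> \<cdot>\<^sub>v v)"
    then have i: "i < D" using vc by simp
    note e = pc_eq[OF r i]
    have vi: "\<And>j. j < D \<Longrightarrow> v $ j = \<rho> j" unfolding v_def by simp
    have si: "(\<theta> \<cdot>\<^sub>v v) $ i = \<theta> * \<rho> i" using i unfolding v_def by simp
    show "(matM D k b c *\<^sub>v v) $ i = (\<theta> \<cdot>\<^sub>v v) $ i"
    proof (cases "i < D - 1")
      case True
      then have ai: "a i = 0" "Suc i < D" "i \<noteq> D - 1" using a0 by auto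
      have "(if 0 < i then real (c i) * v $ (i - 1) else 0) = real (c i) * (if i = 0 then 0 else \<rho> (i - 1))"
        using i vi by auto
      then show ?thesis unfolding rowM[OF vc i] using ai e i vi si by simp
    next
      case False
      then have iD: "i = D - 1" "\<not> Suc i < D" "0 < i" using i D3 by auto
      have "real ((if i = 0 then 0 else c i) + a i + b i) = real k" using H1 i by simp
      then have k: "real k - real (c (D - 1)) = real (a i) + real (b i)" using iD by simp
      have "\<rho> (Suc i) = \<rho> i" using rD iD by simp
      then show ?thesis unfolding rowM[OF vc i] using iD e i vi k si by (simp add: algebra_simps)
    qed
  qed
  show ?thesis unfolding eigenvalue_def eigenvector_def using vc nz Mv by auto
qed

lemma seq_from_eig:
  assumes H1: "\<forall>i<D. (if i = 0 then 0 else c i) + a i + b i = k"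
    and H2: "\<forall>i<D. 0 < b i" and D3: "D \<ge> 3"
    and a0: "\<forall>i. i \<le> D - 2 \<longrightarrow> a i = 0"
    and ev: "eigenvalue (matM D k b c) \<theta>"
  shows "\<exists>\<sigma>. pseudo_cosine D a b c \<theta> \<sigma> \<and> \<sigma> D = \<sigma> (D - 1)"
proof -
  obtain v where vc: "v \<in> carrier_vec D" and nz: "v \<noteq> 0\<^sub>v D" and Mv: "matM D k b c *\<^sub>v v = \<theta> \<cdot>\<^sub>v v"
    using ev unfolding eigenvalue_def eigenvector_def by auto
  have R: "(if 0 < i then real (c i) * v $ (i - 1) else 0)
   + (if Suc i < D then real (b i) * v $ (Suc i) else 0)
   + (if i = D - 1 then (real k - real (c (D - 1))) * v $ i else 0) = \<theta> * v $ i" if i: "i < D" for i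
  proof -
    have "(matM D k b c *\<^sub>v v) $ i = (\<theta> \<cdot>\<^sub>v v) $ i" using Mv by simp
    then show ?thesis unfolding rowM[OF vc i] using vc i by simp
  qed
  have v0: "v $ 0 \<noteq> 0"
  proof
    assume z: "v $ 0 = 0"
    have "i < D \<Longrightarrow> \<forall>j\<le>i. v $ j = 0" for i
    proof (induction i)
      case 0 then show ?case using z by simp
    next
      case (Suc i)
      then have i: "i < D" "Suc i < D" "i \<noteq> D - 1" and IH: "\<forall>j\<le>i. v $ j = 0" by auto
      have "(if 0 < i then real (c i) * v $ (i - 1) else 0) = 0" using IH by auto
      then have "real (b i) * v $ (Suc i) = 0" using R[OF i(1)] i IH by simp
      then have "v $ Suc i = 0" using H2 i(1) by (metis less_numeral_extra(3) mult_eq_0_iff of_nat_eq_0_iff)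
      then show ?case using IH le_Suc_eq by auto
    qed
    then have "v = 0\<^sub>v D" using vc by (intro eq_vecI) auto
    then show False using nz by simp
  qed
  define \<sigma> where "\<sigma> i = v $ (min i (D - 1)) / v $ 0" for i
  have sv: "\<And>i. i < D \<Longrightarrow> \<sigma> i = v $ i / v $ 0" unfolding \<sigma>_def by (simp add: min_def) linarith
  have sD: "\<sigma> D = \<sigma> (D - 1)" unfolding \<sigma>_def by simp
  have "pseudo_cosine D a b c \<theta> \<sigma>"
    unfolding pseudo_cosine_def
  proof (intro conjI allI impI)
    show "\<sigma> 0 = 1" using v0 D3 by (simp add: \<sigma>_def)
    fix i assume i: "i < D"
    show "real (c i) * (if i = 0 then 0 else \<sigma> (i - 1)) + real (a i) * \<sigma> i + real (b i) * \<sigma> (Suc i) = \<theta> * \<sigma> i"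
    proof (cases "i < D - 1")
      case True
      then have ai: "a i = 0" "Suc i < D" "i \<noteq> D - 1" using a0 by auto
      have "(if 0 < i then real (c i) * v $ (i - 1) else 0) + real (b i) * v $ (Suc i) = \<theta> * v $ i"
        using R[OF i] ai by simp
      then have "((if 0 < i then real (c i) * v $ (i - 1) else 0) + real (b i) * v $ (Suc i)) / v $ 0 = \<theta> * v $ i / v $ 0"
        by simp
      moreover have "real (c i) * (if i = 0 then 0 else \<sigma> (i - 1)) = (if 0 < i then real (c i) * v $ (i - 1) else 0) / v $ 0"
        using sv i by auto
      ultimately show ?thesis using ai sv i by (simp add: add_divide_distrib)
    next
      case False
      then have iD: "i = D - 1" "\<not> Suc i < D" "0 < i" "Suc i = D" using i D3 by auto
      have "real ((if i = 0 then 0 else c i) + a i + b i) = real k" using H1 i by simp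
      then have k: "real k - real (c (D - 1)) = real (a i) + real (b i)" using iD by simp
      have "real (c i) * v $ (i - 1) + (real (a i) + real (b i)) * v $ i = \<theta> * v $ i"
        using R[OF i] iD k by simp
      then have "(real (c i) * v $ (i - 1) + (real (a i) + real (b i)) * v $ i) / v $ 0 = \<theta> * v $ i / v $ 0"
        by simp
      moreover have "\<sigma> (Suc i) = \<sigma> i" using sD iD by simp
      ultimately show ?thesis using iD sv i by (simp add: add_divide_distrib algebra_simps)
    qed
  qed
  then show ?thesis using sD by blast
qed



lemma tight_neg_conv:
  assumes H1: "\<forall>i<D. (if i = 0 then 0 else c i) + a i + b i = k"
    and H2: "\<forall>i<D. 0 < b i" and D3: "D \<ge> 3"
    and a0: "\<forall>i. i \<le> D - 2 \<longrightarrow> a i = 0" and aD: "a (D - 1) \<noteq> 0"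
    and s: "pseudo_cosine D a b c (- real k) \<sigma>" and r: "pseudo_cosine D a b c \<theta>' \<rho>"
    and t: "pseudo_cosine D a b c \<eta> (\<lambda>i. \<sigma> i * \<rho> i)"
  shows "\<rho> D = \<rho> (D - 1)"
proof -
  have sr: "\<forall>j\<le>D. \<sigma> j = rm D a b j" using pc_unique[OF H2 s rm_pc[OF H1 H2 D3 a0]] .
  have D0: "0 < D" "1 < D" using D3 by auto
  have s0: "\<sigma> 0 = 1" "\<rho> 0 = 1" using s r by (simp_all add: pseudo_cosine_def)
  have s1: "\<sigma> 1 = -1" using sr D0 by (simp add: rm_def)
  have a00: "a 0 = 0" using a0 by simp
  have "real (b 0) * (\<sigma> 1 * \<rho> 1) = \<eta>" using pc_eq[OF t D0(1)] s0 a00 by simp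
  moreover have "real (b 0) * \<rho> 1 = \<theta>'" using pc_eq[OF r D0(1)] s0 a00 by simp
  ultimately have eta: "\<eta> = - \<theta>'" using s1 by simp
  define m where "m = D - 2"
  have m: "D = Suc (Suc m)" using D3 unfolding m_def by simp
  define i where "i = Suc m"
  have i: "i < D" "i - 1 = m" "Suc i = D" "i \<noteq> 0" "D - 1 = i" unfolding i_def using m by auto
  define sg :: real where "sg = (-1)^m"
  have sg0: "sg \<noteq> 0" unfolding sg_def by simp
  have bD: "real (b i) \<noteq> 0" using H2 i by simp
  have r1: "\<sigma> m = sg" using sr m by (simp add: rm_def sg_def)
  have r2: "\<sigma> i = - sg" using sr m i by (simp add: rm_def sg_def)
  have "(-1::real)^D = sg" unfolding sg_def using m by simp
  then have "\<sigma> D = sg * (1 + 2 * real (a i) / real (b i))" using sr i by (simp add: rm_def)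
  then have ee: "real (b i) * (\<sigma> D * \<rho> D) = sg * (real (b i) + 2 * real (a i)) * \<rho> D"
    using bD by (simp add: field_simps)
  have et: "real (c i) * (\<sigma> m * \<rho> m) + real (a i) * (\<sigma> i * \<rho> i) + real (b i) * (\<sigma> D * \<rho> D) = \<eta> * (\<sigma> i * \<rho> i)"
    using pc_eq[OF t i(1)] i by simp
  then have "sg * (real (c i) * \<rho> m - real (a i) * \<rho> i + (real (b i) + 2 * real (a i)) * \<rho> D) = sg * (\<theta>' * \<rho> i)"
    unfolding ee r1 r2 eta by (simp add: algebra_simps)
  then have e1: "real (c i) * \<rho> m - real (a i) * \<rho> i + (real (b i) + 2 * real (a i)) * \<rho> D = \<theta>' * \<rho> i"
    using sg0 by simp
  have e2: "real (c i) * \<rho> m + real (a i) * \<rho> i + real (b i) * \<rho> D = \<theta>' * \<rho> i"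
    using pc_eq[OF r i(1)] i by simp
  have "real (a i) * \<rho> D = real (a i) * \<rho> i" 
  proof -
    have e1': "real (c i) * \<rho> m - real (a i) * \<rho> i + real (b i) * \<rho> D + 2 * (real (a i) * \<rho> D) = \<theta>' * \<rho> i"
      using e1 by (simp add: distrib_right)
    show ?thesis using e1' e2 by linarith
  qed
  then have "\<rho> D = \<rho> i" using aD i by simp
  then show ?thesis using i by simp
qed



lemma quad:
  assumes H1: "\<forall>i<D. (if i = 0 then 0 else c i) + a i + b i = k"
    and H3: "c 1 = 1" and D3: "D \<ge> 3"
    and a0: "\<forall>i. i \<le> D - 2 \<longrightarrow> a i = 0"
    and s: "pseudo_cosine D a b c \<theta> \<sigma>" and r: "pseudo_cosine D a b c \<theta>' \<rho>"
    and t: "pseudo_cosine D a b c \<eta> (\<lambda>i. \<sigma> i * \<rho> i)"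
  shows "(real k ^ 2 - \<theta> ^ 2) * (real k ^ 2 - \<theta>' ^ 2) = 0"
proof -
  have D0: "0 < D" "1 < D" using D3 by auto
  have s0: "\<sigma> 0 = 1" "\<rho> 0 = 1" using s r by (simp_all add: pseudo_cosine_def)
  have a00: "a 0 = 0" "a 1 = 0" using a0 D3 by auto
  have "b 0 = k" using H1[rule_format, OF D0(1)] a00 by simp
  then have b0: "real (b 0) = real k" by simp
  have "1 + b 1 = k" using H1[rule_format, OF D0(2)] a00 H3 by simp
  then have b1: "real (b 1) = real k - 1" by linarith
  have h1: "real k * \<sigma> 1 = \<theta>" using pc_eq[OF s D0(1)] s0 a00 b0 by simp
  have h2: "real k * \<rho> 1 = \<theta>'" using pc_eq[OF r D0(1)] s0 a00 b0 by simp
  have h3: "real k * \<sigma> 1 * \<rho> 1 = \<eta>" using pc_eq[OF t D0(1)] s0 a00 b0 by simp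
  have h4: "1 + (real k - 1) * \<sigma> (Suc 1) = \<theta> * \<sigma> 1" using pc_eq[OF s D0(2)] s0 a00 b1 H3 by simp
  have h5: "1 + (real k - 1) * \<rho> (Suc 1) = \<theta>' * \<rho> 1" using pc_eq[OF r D0(2)] s0 a00 b1 H3 by simp
  have h6: "1 + (real k - 1) * \<sigma> (Suc 1) * \<rho> (Suc 1) = \<eta> * \<sigma> 1 * \<rho> 1" using pc_eq[OF t D0(2)] s0 a00 b1 H3
    by (simp add: mult.assoc)
  show ?thesis by (rule alg[OF h1 h2 h3 h4 h5 h6])
qed


theorem theorem9p4:
  fixes V :: "'v set" and E :: "'v \<Rightarrow> 'v \<Rightarrow> bool"
    and D k :: nat and a b c :: "nat \<Rightarrow> nat"
  assumes drg: "distance_regular V E D k a b c"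
    and D3: "D \<ge> 3"
    and a0: "\<forall>i. i \<le> D - 2 \<longrightarrow> a i = 0"
    and aD: "a (D - 1) \<noteq> 0"
  shows "(\<forall>\<theta>::real. tight_pair D a b c \<theta> (real k))
    \<and> (\<forall>\<theta>::real. eigenvalue (matM D k b c) \<theta> \<longrightarrow> tight_pair D a b c \<theta> (- real k))
    \<and> (\<forall>\<theta> \<theta>'::real. tight_pair D a b c \<theta> \<theta>' \<longrightarrow>
          \<theta> = real k \<or> \<theta>' = real k
          \<or> (\<theta> = - real k \<and> eigenvalue (matM D k b c) \<theta>')
          \<or> (\<theta>' = - real k \<and> eigenvalue (matM D k b c) \<theta>))"
proof -
  have H1: "\<forall>i<D. (if i = 0 then 0 else c i) + a i + b i = k" using drg_facts(1)[OF drg] .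
  have H2: "\<forall>i<D. 0 < b i" using drg_facts(2)[OF drg] .
  have H3: "c 1 = 1" using drg_facts(3)[OF drg] D3 by simp
  have P1: "\<forall>\<theta>::real. tight_pair D a b c \<theta> (real k)" using part_i[OF H1 H2] by blast
  have P2: "\<forall>\<theta>::real. eigenvalue (matM D k b c) \<theta> \<longrightarrow> tight_pair D a b c \<theta> (- real k)"
  proof (intro allI impI)
    fix \<theta> :: real assume "eigenvalue (matM D k b c) \<theta>"
    then obtain \<sigma> where s: "pseudo_cosine D a b c \<theta> \<sigma>" and sD: "\<sigma> D = \<sigma> (D - 1)"
      using seq_from_eig[OF H1 H2 D3 a0] by blast
    have "tight_seqs D a b c \<sigma> (rm D a b)"
      unfolding tight_seqs_def using tight_neg[OF H1 H2 D3 a0 s sD] by blast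
    then show "tight_pair D a b c \<theta> (- real k)"
      unfolding tight_pair_def using s rm_pc[OF H1 H2 D3 a0] by blast
  qed
  have P3: "\<forall>\<theta> \<theta>'::real. tight_pair D a b c \<theta> \<theta>' \<longrightarrow>
          \<theta> = real k \<or> \<theta>' = real k
          \<or> (\<theta> = - real k \<and> eigenvalue (matM D k b c) \<theta>')
          \<or> (\<theta>' = - real k \<and> eigenvalue (matM D k b c) \<theta>)"
  proof (intro allI impI)
    fix \<theta> \<theta>' :: real assume "tight_pair D a b c \<theta> \<theta>'"
    then obtain \<sigma> \<rho> \<eta> where s: "pseudo_cosine D a b c \<theta> \<sigma>" and r: "pseudo_cosine D a b c \<theta>' \<rho>"
      and t: "pseudo_cosine D a b c \<eta> (\<lambda>i. \<sigma> i * \<rho> i)"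
      unfolding tight_pair_def tight_seqs_def by blast
    have t': "pseudo_cosine D a b c \<eta> (\<lambda>i. \<rho> i * \<sigma> i)"
      using t by (simp add: mult.commute)
    have q: "(real k ^ 2 - \<theta> ^ 2) * (real k ^ 2 - \<theta>' ^ 2) = 0" using quad[OF H1 H3 D3 a0 s r t] .
    have sq: "\<And>x::real. real k ^ 2 - x ^ 2 = 0 \<Longrightarrow> x = real k \<or> x = - real k"
      by (metis power2_eq_iff_nonneg of_nat_0_le_iff eq_iff_diff_eq_0 power2_eq_iff)
    from q have "real k ^ 2 - \<theta> ^ 2 = 0 \<or> real k ^ 2 - \<theta>' ^ 2 = 0" by simp
    then have "\<theta> = real k \<or> \<theta> = - real k \<or> \<theta>' = real k \<or> \<theta>' = - real k" using sq by blast
    then show "\<theta> = real k \<or> \<theta>' = real k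
          \<or> (\<theta> = - real k \<and> eigenvalue (matM D k b c) \<theta>')
          \<or> (\<theta>' = - real k \<and> eigenvalue (matM D k b c) \<theta>)"
    proof (elim disjE)
      assume h: "\<theta> = - real k"
      have "\<rho> D = \<rho> (D - 1)" using tight_neg_conv[OF H1 H2 D3 a0 aD s[unfolded h] r t] .
      then have "eigenvalue (matM D k b c) \<theta>'" using eig_from_seq[OF H1 D3 a0 r] by blast
      then show ?thesis using h by blast
    next
      assume h: "\<theta>' = - real k"
      have "\<sigma> D = \<sigma> (D - 1)" using tight_neg_conv[OF H1 H2 D3 a0 aD r[unfolded h] s t'] .
      then have "eigenvalue (matM D k b c) \<theta>" using eig_from_seq[OF H1 D3 a0 s] by blast
      then show ?thesis using h by blast
    qed auto
  qed
  show ?thesis using P1 P2 P3 by blast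
qed

end
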